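(* Fix a constant $c \in (0,1)$. For $\eta \in (0,1]$, $\omega \in [-c,c]$ and $\epsilon \in (0,1)$, let $f:[-1,1]\to\mathbb{C}$ be the $\eta$-scaled retarded Green's function $$f(x) = \frac{\eta}{(\omega + i\eta) - x}.$$ Then there is a polynomial $p_d$ (with complex coefficients) of degree $d = O\!\left(\frac{1}{\eta}\log\frac{1}{\epsilon}\right)$, where the implied constant depends only on $c$, such that $\|f - p_d\|_{[-1,1]} \le \epsilon$ and $\|p_d\|_{[-1,1]} \le 1+\epsilon$.
   Context: For a function $g$ on $[-1,1]$, $\|g\|_{[-1,1]} = \sup_{x\in[-1,1]} |g(x)|$ denotes the uniform norm; $i$ is the imaginary unit. *)

theory Defs
  imports "HOL-Analysis.Analysis" "HOL-Computational_Algebra.Polynomial"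
begin

definition green :: "real \<Rightarrow> real \<Rightarrow> real \<Rightarrow> complex" where
  "green \<eta> \<omega> x = complex_of_real \<eta> / ((complex_of_real \<omega> + \<i> * complex_of_real \<eta>) - complex_of_real x)"

end

theory Submission
  imports Defs
begin

fun cheb :: "nat \<Rightarrow> complex poly" where
  "cheb 0 = 1"
| "cheb (Suc 0) = [:0, 1:]"
| "cheb (Suc (Suc n)) = [:0, 2:] * cheb (Suc n) - cheb n"

lemma poly_cheb_rec: "poly (cheb (Suc (Suc n))) x = 2 * x * poly (cheb (Suc n)) x - poly (cheb n) x"
  by (simp add: algebra_simps)

lemma degree_cheb: "degree (cheb n) \<le> n"
proof (induction n rule: cheb.induct)
  case (3 n)
  have "degree ([:0, 2:] * cheb (Suc n)) \<le> Suc (Suc n)"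
    using degree_mult_le[of "[:0, 2:]" "cheb (Suc n)"] 3(1) by simp
  moreover have "degree (cheb n) \<le> Suc (Suc n)" using 3(2) by simp
  ultimately show ?case unfolding cheb.simps by (rule degree_diff_le)
qed auto

lemma cheb_cos: "poly (cheb n) (complex_of_real (cos t)) = complex_of_real (cos (real n * t))"
proof (induction n rule: cheb.induct)
  case (3 n)
  have e: "cos (real (Suc (Suc n)) * t) = 2 * cos t * cos (real (Suc n) * t) - cos (real n * t)"
  proof -
    have a: "real (Suc (Suc n)) * t = real (Suc n) * t + t" by (simp add: algebra_simps)
    have b: "real n * t = real (Suc n) * t - t" by (simp add: algebra_simps)
    show ?thesis unfolding a b cos_add cos_diff by simp
  qed
  show ?case unfolding poly_cheb_rec 3(1) 3(2) e by simp
qed auto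

lemma cheb_bound:
  assumes "-1 \<le> x" "x \<le> 1"
  shows "norm (poly (cheb n) (complex_of_real x)) \<le> 1"
proof -
  have "x = cos (arccos x)" using assms by simp
  then have "poly (cheb n) (complex_of_real x) = complex_of_real (cos (real n * arccos x))"
    by (metis cheb_cos)
  then show ?thesis by simp
qed

lemma cheb_sum:
  "(1 - 2*r*x + r^2) * (\<Sum>k\<le>n. r^k * poly (cheb k) x) =
     1 - r*x - r^(n+1) * poly (cheb (n+1)) x + r^(n+2) * poly (cheb n) x"
proof (induction n)
  case 0
  then show ?case by (simp add: algebra_simps power2_eq_square)
next
  case (Suc n)
  have "(1 - 2*r*x + r^2) * (\<Sum>k\<le>Suc n. r^k * poly (cheb k) x) =
     (1 - 2*r*x + r^2) * (\<Sum>k\<le>n. r^k * poly (cheb k) x) + (1 - 2*r*x + r^2) * (r^(Suc n) * poly (cheb (Suc n)) x)"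
    by (simp add: algebra_simps)
  also have "\<dots> = 1 - r*x - r^(n+1) * poly (cheb (n+1)) x + r^(n+2) * poly (cheb n) x
       + (1 - 2*r*x + r^2) * (r^(Suc n) * poly (cheb (Suc n)) x)" using Suc by simp
  also have "\<dots> = 1 - r*x - r^(Suc n+1) * poly (cheb (Suc n+1)) x + r^(Suc n+2) * poly (cheb (Suc n)) x"
    by (simp add: poly_cheb_rec algebra_simps power2_eq_square)
  finally show ?case .
qed

lemma key:
  assumes "0 < \<eta>" "\<eta> \<le> 1" "0 < c" "c < 1" "-c \<le> \<omega>" "\<omega> \<le> c"
  obtains r :: complex where "norm r \<le> 1 / (1 + \<eta>)"
    "\<And>n. \<exists>P. degree P \<le> n \<and> (\<forall>x \<in> {-1..1::real}.
        cmod (green \<eta> \<omega> x - poly P (complex_of_real x)) \<le> 2 * (norm r)^n / (1 - c))"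
proof -
  define z where "z = complex_of_real \<omega> + \<i> * complex_of_real \<eta>"
  define q where "q = csqrt (z^2 - 1)"
  have q2: "q^2 = z^2 - 1" unfolding q_def by simp
  have prod: "(z - q) * (z + q) = 1" using q2 by (simp add: algebra_simps power2_eq_square)
  obtain r r' where rr: "r * r' = 1" "r + r' = 2 * z" "norm r \<le> 1"
  proof (cases "norm (z - q) \<le> 1")
    case True
    then show ?thesis using that[of "z - q" "z + q"] prod by auto
  next
    case False
    have "norm (z - q) * norm (z + q) = 1" using prod by (metis norm_mult norm_one)
    then have "norm (z + q) \<le> 1" using False
      by (metis less_eq_real_def mult_cancel_left1 mult_le_cancel_right1 norm_ge_zero not_le)
    then show ?thesis using that[of "z + q" "z - q"] prod by (auto simp: algebra_simps)
  qed
  define s where "s = norm r"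
  have r0: "r \<noteq> 0" using rr(1) by auto
  have s0: "0 < s" using r0 s_def by auto
  have r'eq: "r' = inverse r" using rr(1) r0 by (metis inverse_unique mult.commute)
  have ns: "(Re r)^2 + (Im r)^2 = s^2" unfolding s_def by (simp add: cmod_power2)
  have imz: "Im r + Im r' = 2 * \<eta>" using arg_cong[OF rr(2), of Im] by (simp add: z_def)
  have imr': "Im r' = - Im r / s^2" using r'eq ns by simp
  have "2 * \<eta> = Im r * (1 - 1 / s^2)" using imz imr' by (simp add: field_simps)
  also have "\<dots> \<le> \<bar>Im r\<bar> * \<bar>1 - 1 / s^2\<bar>" by (metis abs_ge_self abs_mult)
  also have "\<bar>1 - 1 / s^2\<bar> = 1 / s^2 - 1"
  proof -
    have "s^2 \<le> 1" using rr(3) s0 s_def by (simp add: power_le_one)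
    then have "1 \<le> 1 / s^2" using s0 by simp
    then show ?thesis by simp
  qed
  also have "\<bar>Im r\<bar> * (1 / s^2 - 1) \<le> s * (1 / s^2 - 1)"
  proof (rule mult_right_mono)
    show "\<bar>Im r\<bar> \<le> s" unfolding s_def by (rule abs_Im_le_cmod)
    have "s^2 \<le> 1" using rr(3) s0 s_def by (simp add: power_le_one)
    then show "0 \<le> 1 / s^2 - 1" using s0 by simp
  qed
  finally have "2 * \<eta> \<le> s * (1 / s^2 - 1)" .
  also have "s * (1 / s^2 - 1) = 1 / s - s" using s0 by (simp add: field_simps power2_eq_square)
  finally have h2: "2 * \<eta> \<le> 1 / s - s" .
  have "s * (2 * \<eta>) \<le> s * (1 / s - s)" using h2 s0 by (intro mult_left_mono) auto
  also have "s * (1 / s - s) = 1 - s^2" using s0 by (simp add: field_simps power2_eq_square)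
  finally have "2 * \<eta> * s \<le> 1 - s^2" by (simp add: mult_ac)
  moreover have "1 - s^2 \<le> 2 * (1 - s)"
  proof -
    have "(1 - s) * (1 + s) \<le> (1 - s) * 2" using rr(3) s_def s0 by (intro mult_left_mono) auto
    then show ?thesis by (simp add: algebra_simps power2_eq_square)
  qed
  ultimately have "\<eta> * s \<le> 1 - s" by simp
  then have sbound: "s \<le> 1 / (1 + \<eta>)" using assms(1) by (simp add: field_simps)
  have zre: "1 - c \<le> norm (z - 1)" "1 - c \<le> norm (z + 1)"
    using abs_Re_le_cmod[of "z - 1"] abs_Re_le_cmod[of "z + 1"] assms by (auto simp: z_def)
  have "(r' - r)^2 = 4 * ((z - 1) * (z + 1))"
  proof -
    have "(r' - r)^2 = (r + r')^2 - 4 * (r * r')" by (simp add: algebra_simps power2_eq_square)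
    also have "\<dots> = (2 * z)^2 - 4" using rr(1,2) by simp
    finally show ?thesis by (simp add: algebra_simps power2_eq_square)
  qed
  then have "norm (r' - r)^2 = 4 * (norm (z - 1) * norm (z + 1))"
    by (metis norm_mult norm_power norm_numeral)
  moreover have "(1 - c) * (1 - c) \<le> norm (z - 1) * norm (z + 1)"
    using zre assms(4) by (intro mult_mono) auto
  ultimately have "(2 * (1 - c))^2 \<le> norm (r' - r)^2"
    unfolding power2_eq_square by linarith
  then have drr: "2 * (1 - c) \<le> norm (r' - r)" by (rule power2_le_imp_le) simp
  have Deq: "1 - r^2 = r * (r' - r)" using rr(1) by (simp add: algebra_simps power2_eq_square)
  have Dnorm: "2 * s * (1 - c) \<le> norm (1 - r^2)"
    unfolding Deq norm_mult s_def[symmetric] using drr s0 by simp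
  have "0 < 2 * s * (1 - c)" using s0 assms by simp
  then have D0: "1 - r^2 \<noteq> 0" using Dnorm by auto
  have z2: "2 * r * z = 1 + r^2"
  proof -
    have "2 * r * z = r * (r + r')" using rr(2) by simp
    also have "\<dots> = r * r + r * r'" by (simp add: algebra_simps)
    finally show ?thesis using rr(1) by (simp add: power2_eq_square)
  qed
  show thesis
  proof (rule that[OF sbound[unfolded s_def]])
    fix n
    define Sp where "Sp = (\<Sum>k\<le>n. smult (r^k) (cheb k))"
    define P where "P = smult (complex_of_real \<eta> * (2 * r / (1 - r^2))) (smult 2 Sp - 1)"
    have "degree Sp \<le> n" unfolding Sp_def
      by (rule degree_sum_le) (auto intro: order.trans[OF degree_smult_le] order.trans[OF degree_cheb])
    then have degP: "degree P \<le> n" unfolding P_def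
      by (intro order.trans[OF degree_smult_le] degree_diff_le) (auto intro: order.trans[OF degree_smult_le])
    have err: "cmod (green \<eta> \<omega> x - poly P (complex_of_real x)) \<le> 2 * s^n / (1 - c)"
      if x: "x \<in> {-1..1::real}" for x
    proof -
      define X where "X = complex_of_real x"
      define Y where "Y = z - X"
      define S where "S = (\<Sum>k\<le>n. r^k * poly (cheb k) X)"
      define E where "E = poly (cheb (n+1)) X - r * poly (cheb n) X"
      define D where "D = 1 - r^2"
      have Y0: "\<eta> \<le> norm Y" using abs_Im_le_cmod[of Y] assms by (simp add: Y_def z_def X_def)
      then have Yne: "Y \<noteq> 0" using assms by auto
      have polyP: "poly P X = complex_of_real \<eta> * (2 * r / D) * (2 * S - 1)"
        by (simp add: P_def Sp_def S_def D_def poly_sum)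
      have gr: "green \<eta> \<omega> x = complex_of_real \<eta> / Y" by (simp add: green_def Y_def z_def X_def)
      have cs: "2 * r * Y * S = 1 - r * X - r^(n+1) * E"
      proof -
        have "1 - 2*r*X + r^2 = 2 * r * Y" using z2 by (simp add: Y_def algebra_simps)
        then have "2 * r * Y * S = (1 - 2*r*X + r^2) * S" by simp
        also have "\<dots> = 1 - r*X - r^(n+1) * poly (cheb (n+1)) X + r^(n+2) * poly (cheb n) X"
          unfolding S_def by (rule cheb_sum)
        also have "\<dots> = 1 - r * X - r^(n+1) * E" by (simp add: E_def algebra_simps)
        finally show ?thesis .
      qed
      have key: "D - 2 * r * Y * (2 * S - 1) = 2 * r^(n+1) * E"
      proof -
        have "D - 2 * r * Y * (2 * S - 1) = D - 2 * (2 * r * Y * S) + 2 * r * Y" by (simp add: algebra_simps)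
        also have "\<dots> = D - 2 * (1 - r * X - r^(n+1) * E) + 2 * r * Y" by (simp only: cs)
        also have "\<dots> = D - 2 * (1 - r * X - r^(n+1) * E) + (1 + r^2 - 2 * r * X)"
          using z2 by (simp add: Y_def algebra_simps)
        also have "D - 2 * (1 - r * X - r^(n+1) * E) + (1 + r^2 - 2 * r * X) = 2 * r^(n+1) * E"
          by (simp add: D_def algebra_simps)
        finally show ?thesis .
      qed
      have "green \<eta> \<omega> x - poly P X = complex_of_real \<eta> * (D - 2 * r * Y * (2 * S - 1)) / (D * Y)"
        unfolding gr polyP using Yne D0 by (simp add: D_def field_simps)
      also have "\<dots> = complex_of_real \<eta> * (2 * r^(n+1) * E) / (D * Y)" by (simp add: key)
      finally have eq: "green \<eta> \<omega> x - poly P X = complex_of_real \<eta> * (2 * r^(n+1) * E) / (D * Y)" .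
      have Eb: "norm E \<le> 2"
      proof -
        have "norm E \<le> norm (poly (cheb (n+1)) X) + s * norm (poly (cheb n) X)"
          unfolding E_def s_def by (metis norm_triangle_ineq4 norm_mult)
        also have "\<dots> \<le> 1 + 1 * 1"
          using cheb_bound[of x] x rr(3) s_def s0 unfolding X_def
          by (intro add_mono mult_mono) auto
        finally show ?thesis by simp
      qed
      have "cmod (green \<eta> \<omega> x - poly P X) = \<eta> * (2 * s^(n+1) * norm E) / (norm D * norm Y)"
        unfolding eq using assms by (simp add: norm_mult norm_divide norm_power s_def)
      also have "\<dots> \<le> \<eta> * (2 * s^(n+1) * 2) / ((2 * s * (1 - c)) * \<eta>)"
      proof (rule frac_le)
        show "0 \<le> \<eta> * (2 * s ^ (n + 1) * 2)" using assms s0 by simp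
        show "\<eta> * (2 * s ^ (n + 1) * norm E) \<le> \<eta> * (2 * s ^ (n + 1) * 2)"
          using Eb assms s0 by (intro mult_left_mono) auto
        show "0 < 2 * s * (1 - c) * \<eta>" using assms s0 by simp
        show "2 * s * (1 - c) * \<eta> \<le> norm D * norm Y"
          using Dnorm Y0 assms s0 unfolding D_def by (intro mult_mono) auto
      qed
      also have "\<dots> = 2 * s^n / (1 - c)" using assms s0 by (simp add: field_simps)
      finally show ?thesis by (simp add: X_def)
    qed
    show "\<exists>P. degree P \<le> n \<and> (\<forall>x \<in> {-1..1::real}.
        cmod (green \<eta> \<omega> x - poly P (complex_of_real x)) \<le> 2 * (norm r)^n / (1 - c))"
      using degP err s_def by blast
  qed
qed

lemma ln_one_plus_ge: fixes x :: real assumes "0 < x" "x \<le> 1" shows "x / 2 \<le> ln (1 + x)"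
proof -
  have "ln (inverse (1 + x)) \<le> inverse (1 + x) - 1" using assms ln_le_minus_one[of "inverse (1 + x)"] by simp
  moreover have "ln (inverse (1 + x)) = - ln (1 + x)" using assms by (simp add: ln_inverse)
  moreover have "inverse (1 + x) - 1 = - (x / (1 + x))" using assms by (simp add: field_simps)
  ultimately have "x / (1 + x) \<le> ln (1 + x)" by simp
  moreover have "x / 2 \<le> x / (1 + x)" using assms by (intro divide_left_mono) auto
  ultimately show ?thesis by linarith
qed

lemma green_norm: assumes "0 < \<eta>" shows "cmod (green \<eta> \<omega> x) \<le> 1"
proof -
  define Y where "Y = (complex_of_real \<omega> + \<i> * complex_of_real \<eta>) - complex_of_real x"
  have "\<eta> \<le> norm Y" using abs_Im_le_cmod[of Y] assms by (simp add: Y_def)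
  then have "\<eta> / norm Y \<le> 1" using assms by (simp add: divide_le_eq_1)
  then show ?thesis using assms by (simp add: green_def Y_def[symmetric] norm_divide)
qed

lemma green_half: assumes "0 < \<eta>" shows "cmod (green \<eta> \<omega> x - poly [:-\<i>/2:] (complex_of_real x)) = 1/2"
proof -
  define Y where "Y = (complex_of_real \<omega> + \<i> * complex_of_real \<eta>) - complex_of_real x"
  have "\<eta> \<le> norm Y" using abs_Im_le_cmod[of Y] assms by (simp add: Y_def)
  then have Y0: "Y \<noteq> 0" using assms by auto
  have "green \<eta> \<omega> x - poly [:-\<i>/2:] (complex_of_real x) = (\<i> * cnj Y) / (2 * Y)"
  proof -
    have a: "green \<eta> \<omega> x = complex_of_real \<eta> / Y" by (simp add: green_def Y_def)
    have b: "complex_of_real \<eta> / Y + \<i> / 2 = (2 * complex_of_real \<eta> + \<i> * Y) / (2 * Y)"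
      using Y0 by (simp add: field_simps)
    have c: "2 * complex_of_real \<eta> + \<i> * Y = \<i> * cnj Y" by (simp add: Y_def complex_eq_iff)
    show ?thesis unfolding a using b c by simp
  qed
  then show ?thesis using Y0 by (simp add: norm_divide norm_mult)
qed

theorem theorem3:
  fixes c :: real
  assumes "0 < c" "c < 1"
  shows "\<exists>C > 0. \<forall>\<eta> \<omega> \<epsilon>. 0 < \<eta> \<and> \<eta> \<le> 1 \<and> -c \<le> \<omega> \<and> \<omega> \<le> c \<and> 0 < \<epsilon> \<and> \<epsilon> < 1 \<longrightarrow>
     (\<exists>p :: complex poly.
        real (degree p) \<le> C * (1 / \<eta>) * ln (1 / \<epsilon>) \<and>
        (\<forall>x \<in> {-1..1::real}. cmod (green \<eta> \<omega> x - poly p (complex_of_real x)) \<le> \<epsilon>) \<and>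
        (\<forall>x \<in> {-1..1::real}. cmod (poly p (complex_of_real x)) \<le> 1 + \<epsilon>))"
proof -
  define K where "K = ln (2 / (1 - c))"
  have K0: "0 < K" unfolding K_def using assms by simp
  show ?thesis
  proof (intro exI[of _ "4 * K + 4"] conjI allI impI)
    show "0 < 4 * K + 4" using K0 by simp
    fix \<eta> \<omega> \<epsilon> :: real
    assume h: "0 < \<eta> \<and> \<eta> \<le> 1 \<and> -c \<le> \<omega> \<and> \<omega> \<le> c \<and> 0 < \<epsilon> \<and> \<epsilon> < 1"
    then have h1: "0 < \<eta>" "\<eta> \<le> 1" "-c \<le> \<omega>" "\<omega> \<le> c" "0 < \<epsilon>" "\<epsilon> < 1" by auto
    have u0: "0 < ln (1 / \<epsilon>)" using h1 by simp
    have approx: "\<exists>p :: complex poly.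
        real (degree p) \<le> (4 * K + 4) * (1 / \<eta>) * ln (1 / \<epsilon>) \<and>
        (\<forall>x \<in> {-1..1::real}. cmod (green \<eta> \<omega> x - poly p (complex_of_real x)) \<le> \<epsilon>)"
    proof (cases "1/2 \<le> \<epsilon>")
      case True
      have "0 \<le> (4 * K + 4) * (1 / \<eta>) * ln (1 / \<epsilon>)" using K0 h1 u0 by simp
      moreover have "cmod (green \<eta> \<omega> x - poly [:-\<i>/2:] (complex_of_real x)) \<le> \<epsilon>" for x
        using green_half[OF h1(1), of \<omega> x] True by linarith
      ultimately show ?thesis
        by (intro exI[of _ "[:-\<i>/2:]"] conjI ballI) simp_all
    next
      case False
      define u where "u = ln (1 / \<epsilon>)"
      have u: "1/2 \<le> u"
      proof -
        have "ln 2 \<le> ln (1 / \<epsilon>)" using False h1 by (subst ln_le_cancel_iff) (auto simp: field_simps)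
        then show ?thesis using ln2_ge_two_thirds u_def by simp
      qed
      define A where "A = 2 / ((1 - c) * \<epsilon>)"
      define L where "L = ln A"
      have A1: "1 < A"
      proof -
        have "(1 - c) * \<epsilon> < 1 * 2" using assms h1 by (intro mult_strict_mono') auto
        then show "1 < A" unfolding A_def using assms h1 by (simp add: field_simps)
      qed
      have LKu: "L = K + u" unfolding L_def K_def u_def A_def using assms h1
        by (simp add: ln_div ln_mult)
      have L0: "0 < L" using A1 L_def by simp
      define n where "n = nat \<lceil>2 * L / \<eta>\<rceil>"
      obtain r :: complex where r: "norm r \<le> 1 / (1 + \<eta>)"
        "\<And>n. \<exists>P. degree P \<le> n \<and> (\<forall>x \<in> {-1..1::real}.
          cmod (green \<eta> \<omega> x - poly P (complex_of_real x)) \<le> 2 * (norm r)^n / (1 - c))"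
        by (rule key[OF h1(1,2) assms h1(3,4)]) blast
      obtain P where P: "degree P \<le> n" "\<forall>x \<in> {-1..1::real}.
          cmod (green \<eta> \<omega> x - poly P (complex_of_real x)) \<le> 2 * (norm r)^n / (1 - c)"
        using r(2) by blast
      have nge: "2 * L / \<eta> \<le> real n" unfolding n_def by linarith
      have nle: "real n \<le> 2 * L / \<eta> + 1"
      proof -
        have t0: "0 \<le> 2 * L / \<eta>" using L0 h1 by simp
        then have "real n = of_int \<lceil>2 * L / \<eta>\<rceil>" unfolding n_def by simp
        also have "\<dots> \<le> 2 * L / \<eta> + 1" by (rule of_int_ceiling_le_add_one)
        finally show ?thesis .
      qed
      have "L \<le> real n * ln (1 + \<eta>)"
      proof -
        have "L = (2 * L / \<eta>) * (\<eta> / 2)" using h1 by (simp add: field_simps)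
        also have "\<dots> \<le> real n * ln (1 + \<eta>)"
          using nge ln_one_plus_ge[OF h1(1,2)] L0 h1 by (intro mult_mono) auto
        finally show ?thesis .
      qed
      then have "ln A \<le> ln ((1 + \<eta>)^n)" using h1 L_def by (simp add: ln_realpow)
      then have "A \<le> (1 + \<eta>)^n" using A1 h1 by (subst (asm) ln_le_cancel_iff) auto
      then have "(norm r)^n \<le> 1 / A"
      proof -
        have "(norm r)^n \<le> (1 / (1 + \<eta>))^n" using r(1) by (intro power_mono) auto
        also have "\<dots> = 1 / (1 + \<eta>)^n" by (simp add: power_one_over)
        also have "\<dots> \<le> 1 / A" using \<open>A \<le> (1 + \<eta>)^n\<close> A1 by (intro divide_left_mono) auto
        finally show ?thesis .
      qed
      then have err: "2 * (norm r)^n / (1 - c) \<le> \<epsilon>"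
        using assms h1 by (simp add: A_def field_simps)
      have deg: "real (degree P) \<le> (4 * K + 4) * (1 / \<eta>) * ln (1 / \<epsilon>)"
      proof -
        have "real (degree P) \<le> 2 * L / \<eta> + 1" using P(1) nle by linarith
        also have "\<dots> = (2 * K + 2 * u + \<eta>) / \<eta>" using h1 LKu by (simp add: field_simps)
        also have "\<dots> \<le> ((4 * K + 4) * u) / \<eta>"
        proof (rule divide_right_mono)
          have "2 * K \<le> 4 * K * u" using K0 u by (simp add: mult_left_mono[of "1/2" u "4*K", simplified])
          then show "2 * K + 2 * u + \<eta> \<le> (4 * K + 4) * u" using u h1 by (simp add: algebra_simps)
        qed (use h1 in simp)
        finally show ?thesis by (simp add: u_def)
      qed
      show ?thesis using deg P(2) err by (intro exI[of _ P]) (auto intro: order.trans)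
    qed
    then obtain p :: "complex poly" where p: "real (degree p) \<le> (4 * K + 4) * (1 / \<eta>) * ln (1 / \<epsilon>)"
      "\<forall>x \<in> {-1..1::real}. cmod (green \<eta> \<omega> x - poly p (complex_of_real x)) \<le> \<epsilon>" by blast
    have "\<forall>x \<in> {-1..1::real}. cmod (poly p (complex_of_real x)) \<le> 1 + \<epsilon>"
    proof
      fix x :: real assume x: "x \<in> {-1..1}"
      have "cmod (poly p (complex_of_real x)) \<le> cmod (green \<eta> \<omega> x) + cmod (green \<eta> \<omega> x - poly p (complex_of_real x))"
        using norm_triangle_ineq4[of "green \<eta> \<omega> x" "green \<eta> \<omega> x - poly p (complex_of_real x)"] by simp
      then show "cmod (poly p (complex_of_real x)) \<le> 1 + \<epsilon>" using green_norm[OF h1(1), of \<omega> x] p(2) x by fastforce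
    qed
    then show "\<exists>p :: complex poly.
        real (degree p) \<le> (4 * K + 4) * (1 / \<eta>) * ln (1 / \<epsilon>) \<and>
        (\<forall>x \<in> {-1..1::real}. cmod (green \<eta> \<omega> x - poly p (complex_of_real x)) \<le> \<epsilon>) \<and>
        (\<forall>x \<in> {-1..1::real}. cmod (poly p (complex_of_real x)) \<le> 1 + \<epsilon>)"
      using p by blast
  qed
qed

end
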